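(* Let $p,q,s,u,v,w,t$ be parameters and let $(a_n)_{n\ge0}$ be defined by $a_0=1$, $a_1=p$, $a_2=q$, $a_3=s$ and, for $n\ge4$, $$a_n=u\,a_{n-1}+v\,a_{n-2}+w\,a_{n-3}+t\sum_{k=1}^{n-4}a_ka_{n-k-3}.$$ Let $N(x)=1+(p-u)x-(v+pu-q)x^2-(w-s-t+qu+pv)x^3$ and $D(x)=1-ux-vx^2-(w-2t)x^3$. Then the generating function $\sum_{n\ge0}a_nx^n$ equals $$\left(\frac{N(x)}{D(x)},\ \frac{tx^3N(x)}{D(x)^2}\right)\cdot c(x)=\frac{N(x)}{D(x)}\,c\!\left(\frac{tx^3N(x)}{D(x)^2}\right).$$
   Context: $c(x)=\frac{1-\sqrt{1-4x}}{2x}$ is the generating function of the Catalan numbers. For power series $g(x)$ with $g(0)\neq0$ and $f(x)$ with $f(0)=0$, the Riordan array $(g,f)$ acts on a power series $h(x)$ by $(g,f)\cdot h(x)=g(x)h(f(x))$. *)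

theory Defs
  imports "HOL-Computational_Algebra.Formal_Power_Series"
begin

definition catalan :: "nat \<Rightarrow> nat" where
  "catalan n = (2 * n choose n) div (n + 1)"

definition catalan_fps :: "'a::comm_ring_1 fps" where
  "catalan_fps = Abs_fps (\<lambda>n. of_nat (catalan n))"

text \<open>Action of the Riordan array (g, f) on a power series h: g(x) h(f(x)).\<close>
definition riordan_act :: "'a::field fps \<Rightarrow> 'a fps \<Rightarrow> 'a fps \<Rightarrow> 'a fps" where
  "riordan_act g f h = g * fps_compose h f"

end

theory Submission
  imports Defs
begin


lemma cb_real: "real (2*n choose n) = 4^n * pochhammer (1/2) n / fact n"
proof -
  have "real (2*n choose n) = fact (2*n) / (fact n * fact n)"
    by (simp add: binomial_fact)
  also have "\<dots> = 2^(2*n) * pochhammer (1/2) n / fact n"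
    by (simp add: fact_double)
  finally show ?thesis by (simp add: power_mult)
qed

lemma gb_half: "((-1/2::real) gchoose n) = (-1/4)^n * real (2*n choose n)"
proof -
  have "((-1/2::real) gchoose n) = (-1)^n * pochhammer (1/2) n / fact n"
    by (simp add: gbinomial_pochhammer)
  also have "\<dots> = (-1/4)^n * (4^n * pochhammer (1/2) n / fact n)"
    by (simp add: power_mult_distrib[symmetric] field_simps)
  finally show ?thesis by (simp add: cb_real)
qed

lemma central_conv: "(\<Sum>k=0..n. real (2*k choose k) * real (2*(n-k) choose (n-k))) = 4^n"
proof -
  have "(\<Sum>k=0..n. ((-1/2::real) gchoose k) * ((-1/2) gchoose (n-k))) = (-1/2 + -1/2) gchoose n"
    by (rule gbinomial_Vandermonde)
  also have "(-1/2 + -1/2::real) = - 1" by simp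
  also have "(- 1::real) gchoose n = (-1)^n"
    using gbinomial_minus[of "1::real" n] by (simp add: binomial_gbinomial[symmetric])
  finally have *: "(\<Sum>k=0..n. ((-1/2::real) gchoose k) * ((-1/2) gchoose (n-k))) = (-1)^n" .
  have "(\<Sum>k=0..n. ((-1/2::real) gchoose k) * ((-1/2) gchoose (n-k)))
      = (\<Sum>k=0..n. (-1/4)^n * (real (2*k choose k) * real (2*(n-k) choose (n-k))))"
  proof (rule sum.cong)
    fix k assume "k \<in> {0..n}"
    then have h: "(-1/4::real)^k * (-1/4)^(n-k) = (-1/4)^n"
      by (simp add: power_add[symmetric])
    have "((-1/2::real) gchoose k) * ((-1/2) gchoose (n-k)) = ((-1/4::real)^k * (-1/4)^(n-k)) * (real (2*k choose k) * real (2*(n-k) choose (n-k)))"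
      by (simp only: gb_half mult_ac)
    then show "((-1/2::real) gchoose k) * ((-1/2) gchoose (n-k)) = (-1/4)^n * (real (2*k choose k) * real (2*(n-k) choose (n-k)))"
      by (simp only: h)
  qed simp
  also have "\<dots> = (-1/4)^n * (\<Sum>k=0..n. real (2*k choose k) * real (2*(n-k) choose (n-k)))"
    by (simp add: sum_distrib_left)
  finally have "(-1/4::real)^n * (\<Sum>k=0..n. real (2*k choose k) * real (2*(n-k) choose (n-k))) = (-1)^n"
    using * by simp
  then have "(-4::real)^n * ((-1/4::real)^n * (\<Sum>k=0..n. real (2*k choose k) * real (2*(n-k) choose (n-k)))) = (-4)^n * (-1)^n"
    by simp
  then show ?thesis
    by (simp add: mult.assoc[symmetric] power_mult_distrib[symmetric])
qed

lemma cat_real: "real (catalan m) = real (2*m choose m) / (m+1)"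
proof -
  have a1: "(2*m - m) * (2*m choose m) = 2*m * ((2*m - 1) choose m)"
    by (rule binomial_absorb_comp)
  have a2: "Suc m * (2*m choose Suc m) = 2*m * ((2*m - 1) choose m)"
    by (rule binomial_absorption)
  have "2*m - m = m" by simp
  then have a1': "m * (2*m choose m) = 2*m * ((2*m - 1) choose m)"
    using a1 by (simp only:)
  have e: "(m+1) * (2*m choose (m+1)) = m * (2*m choose m)"
    using a1' a2 by (metis Suc_eq_plus1)
  have le: "2*m choose (m+1) \<le> 2*m choose m"
  proof -
    have "(m+1) * (2*m choose (m+1)) \<le> (m+1) * (2*m choose m)" using e by simp
    then show ?thesis unfolding mult_le_cancel1 by simp
  qed
  define X where "X = (2*m choose m) - (2*m choose (m+1))"
  have d: "(2*m choose m) = (m+1) * X"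
    using e le unfolding X_def by (simp add: diff_mult_distrib2)
  have c: "catalan m = X"
    unfolding catalan_def d by (rule nonzero_mult_div_cancel_left) simp
  have "real (2*m choose m) = real (m+1) * real (catalan m)"
    unfolding d c by (simp add: algebra_simps)
  then show ?thesis by (simp add: field_simps)
qed


lemma cb_step: "real (2*Suc m choose Suc m) * (m+1) = 2*(2*m+1) * real (2*m choose m)"
proof -
  have "real (2*Suc m choose Suc m) * (m+1) = 4^(Suc m) * pochhammer (1/2) (Suc m) / fact (Suc m) * (m+1)"
    by (simp only: cb_real)
  also have "\<dots> = 4 * (1/2 + m) * (4^m * pochhammer (1/2) m / fact m)"
    using fact_gt_zero[where 'a=real, of m] by (simp add: pochhammer_Suc divide_simps)
  also have "\<dots> = 2*(2*m+1) * real (2*m choose m)"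
    by (simp only: cb_real[of m]) (simp add: field_simps)
  finally show ?thesis by (simp only: of_nat_mult of_nat_add of_nat_1 of_nat_numeral)
qed

lemma numeral_mult_nth [simp]: "fps_nth (numeral k * f) n = numeral k * fps_nth (f::'a::comm_ring_1 fps) n"
  by (simp only: fps_numeral_fps_const fps_mult_left_const_nth)

lemma catalan_fps_real: "fps_X * (catalan_fps::real fps)^2 = catalan_fps - 1"
proof -
  define B :: "real fps" where "B = Abs_fps (\<lambda>n. real (2*n choose n))"
  define G :: "real fps" where "G = Abs_fps (\<lambda>n. 4^n)"
  define C :: "real fps" where "C = catalan_fps"
  have BB: "B * B = G"
    unfolding B_def G_def by (simp add: fps_eq_iff fps_mult_nth central_conv)
  have G1: "(1 - 4 * fps_X) * G = 1"
  proof (rule fps_ext)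
    fix n
    show "fps_nth ((1 - 4 * fps_X) * G) n = fps_nth (1::real fps) n"
      by (cases n) (simp_all add: G_def algebra_simps fps_X_mult_nth mult.assoc)
  qed
  have CS: "2 * fps_X * C = 1 - (1 - 4 * fps_X) * B"
  proof (rule fps_ext)
    fix n
    show "fps_nth (2 * fps_X * C) n = fps_nth (1 - (1 - 4 * fps_X) * B) n"
    proof (cases n)
      case 0
      then show ?thesis by (simp add: B_def)
    next
      case (Suc m)
      have "2 * real (catalan m) = 4 * real (2*m choose m) - real (2*Suc m choose Suc m)"
        using cb_step[of m] by (simp add: cat_real field_simps)
      then show ?thesis using Suc
        by (simp add: B_def C_def catalan_fps_def algebra_simps fps_X_mult_nth mult.assoc)
    qed
  qed
  define S where "S = (1 - 4 * fps_X) * B"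
  have SS: "S * S = 1 - 4 * fps_X"
  proof -
    have "S * S = (1 - 4 * fps_X) * ((1 - 4 * fps_X) * (B * B))"
      unfolding S_def by (simp add: mult_ac)
    also have "\<dots> = 1 - 4 * fps_X" using G1 by (simp add: BB)
    finally show ?thesis .
  qed
  have "(4 * fps_X) * (fps_X * C^2 - C + 1) = (2 * fps_X * C)^2 - 2 * (2 * fps_X * C) + 4 * fps_X"
    by (simp add: algebra_simps power2_eq_square)
  also have "\<dots> = (1 - S)^2 - 2 * (1 - S) + 4 * fps_X"
    by (simp only: CS S_def)
  also have "\<dots> = S * S - 1 + 4 * fps_X"
    by (simp add: algebra_simps power2_eq_square)
  also have "\<dots> = 0" by (simp add: SS)
  finally have "(4 * fps_X) * (fps_X * C^2 - C + 1) = 0" .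
  moreover have "(4 * fps_X :: real fps) \<noteq> 0"
    by (metis fps_X_neq_zero mult_eq_0_iff zero_neq_numeral)
  ultimately have "fps_X * C^2 - C + 1 = 0" by simp
  then show ?thesis unfolding C_def by (simp add: algebra_simps)
qed

lemma catalan_Suc: "catalan (Suc n) = (\<Sum>i=0..n. catalan i * catalan (n - i))"
proof -
  have "fps_nth (fps_X * (catalan_fps::real fps)^2) (Suc n) = fps_nth (catalan_fps - 1) (Suc n)"
    by (simp only: catalan_fps_real)
  then have "real (catalan (Suc n)) = real (\<Sum>i=0..n. catalan i * catalan (n - i))"
    by (simp only: fps_X_mult_nth power2_eq_square) (simp add: fps_mult_nth catalan_fps_def)
  then show ?thesis by (simp only: of_nat_eq_iff)
qed

lemma catalan_0: "catalan 0 = 1" by (simp add: catalan_def)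

lemma catalan_fps_eq: "(catalan_fps::'a::comm_ring_1 fps) = 1 + fps_X * catalan_fps^2"
proof (rule fps_ext)
  fix n
  show "fps_nth (catalan_fps::'a fps) n = fps_nth (1 + fps_X * catalan_fps^2) n"
  proof (cases n)
    case 0 then show ?thesis by (simp add: catalan_fps_def catalan_0)
  next
    case (Suc m)
    then show ?thesis
      by (simp only: fps_add_nth fps_X_mult_nth power2_eq_square)
        (simp add: catalan_fps_def catalan_Suc fps_mult_nth)
  qed
qed


lemma xpow_const_nth: "fps_nth (fps_const c * fps_X^k * f) n = (if n < k then 0 else c * fps_nth f (n - k))"
  by (simp add: mult.assoc fps_X_power_mult_nth)

theorem mainTheorem7:
  fixes p q s u v w t :: "'a::field" and a :: "nat \<Rightarrow> 'a"
  assumes "a 0 = 1" and "a 1 = p" and "a 2 = q" and "a 3 = s"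
    and "\<And>n. n \<ge> 4 \<Longrightarrow>
           a n = u * a (n - 1) + v * a (n - 2) + w * a (n - 3)
                 + t * (\<Sum>k = 1..n - 4. a k * a (n - k - 3))"
  defines "N \<equiv> 1 + fps_const (p - u) * fps_X - fps_const (v + p * u - q) * fps_X ^ 2
               - fps_const (w - s - t + q * u + p * v) * fps_X ^ 3"
    and "D \<equiv> 1 - fps_const u * fps_X - fps_const v * fps_X ^ 2 - fps_const (w - 2 * t) * fps_X ^ 3"
  shows "Abs_fps a = riordan_act (N * inverse D) (fps_const t * fps_X ^ 3 * N * inverse (D ^ 2)) catalan_fps
       \<and> riordan_act (N * inverse D) (fps_const t * fps_X ^ 3 * N * inverse (D ^ 2)) catalan_fps
         = (N * inverse D) * fps_compose catalan_fps (fps_const t * fps_X ^ 3 * N * inverse (D ^ 2))"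
proof -
  note a0 = assms(1) and a1 = assms(2) and a2 = assms(3) and a3 = assms(4) and rec = assms(5)
  define A where "A = Abs_fps a"
  define T :: "'a fps" where "T = fps_const t * fps_X ^ 3"
  have AD: "A * D = A - fps_const u * fps_X^1 * A - fps_const v * fps_X^2 * A - fps_const (w - 2*t) * fps_X^3 * A"
    unfolding D_def by (simp add: algebra_simps)
  have TA: "T * A^2 = fps_const t * fps_X^3 * (A*A)"
    unfolding T_def by (simp add: power2_eq_square)
  have Nn: "fps_nth N n = (if n = 0 then 1 else if n = 1 then p - u else if n = 2 then -(v + p*u - q)
      else if n = 3 then -(w - s - t + q * u + p * v) else 0)" for n
    unfolding N_def by simp
  have eqA: "A * D - T * A^2 = N"
  proof (rule fps_ext)
    fix n
    show "fps_nth (A * D - T * A^2) n = fps_nth N n"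
    proof (cases "n < 4")
      case True
      then have "n = 0 \<or> n = 1 \<or> n = 2 \<or> n = 3" by auto
      then show ?thesis
        unfolding AD TA Nn fps_sub_nth xpow_const_nth
        using a1 by (auto simp: A_def a0 a2 a3 fps_mult_nth)
    next
      case False
      then obtain j where j: "n = j + 4" by (metis add.commute le_Suc_ex not_less)
      have sq: "fps_nth (A*A) (j+1) = 2 * a (j+1) + (\<Sum>k = 1..j. a k * a (j + 1 - k))"
      proof -
        have "fps_nth (A*A) (j+1) = (\<Sum>k = 0..Suc j. a k * a (j + 1 - k))"
          by (simp add: A_def fps_mult_nth)
        also have "\<dots> = (\<Sum>k = 0..j. a k * a (j + 1 - k)) + a (Suc j) * a 0"
          by (simp add: sum.atLeast0_atMost_Suc)
        also have "(\<Sum>k = 0..j. a k * a (j + 1 - k)) = a 0 * a (j+1) + (\<Sum>k = Suc 0..j. a k * a (j + 1 - k))"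
          by (simp add: sum.atLeast_Suc_atMost)
        finally show ?thesis using a0 by simp
      qed
      have r: "a n = u * a (n - 1) + v * a (n - 2) + w * a (n - 3) + t * (\<Sum>k = 1..j. a k * a (j + 1 - k))"
      proof -
        have "a n = u * a (n - 1) + v * a (n - 2) + w * a (n - 3) + t * (\<Sum>k = 1..n - 4. a k * a (n - k - 3))"
          using j rec by simp
        also have "(\<Sum>k = 1..n - 4. a k * a (n - k - 3)) = (\<Sum>k = 1..j. a k * a (j + 1 - k))"
          using j by (intro sum.cong) auto
        finally show ?thesis .
      qed
      have "fps_nth (A * D - T * A^2) n = a n - u * a (n - 1) - v * a (n - 2) - (w - 2*t) * a (n - 3)
              - t * fps_nth (A*A) (j+1)"
        unfolding AD TA fps_sub_nth xpow_const_nth using j by (simp add: A_def)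
      also have "\<dots> = 0" unfolding sq r using j by (simp add: algebra_simps)
      finally show ?thesis using j Nn by simp
    qed
  qed
  define ID where "ID = inverse D"
  have D0: "fps_nth D 0 = 1" unfolding D_def by simp
  have DID: "D * ID = 1" unfolding ID_def using D0 by (simp add: inverse_mult_eq_1')
  define F where "F = fps_const t * fps_X ^ 3 * N * inverse (D ^ 2)"
  have F0: "fps_nth F 0 = 0" unfolding F_def by simp
  have FT: "F = T * N * ID^2" unfolding F_def T_def ID_def by (simp add: fps_inverse_power)
  define C :: "'a fps" where "C = catalan_fps"
  define K where "K = fps_compose C F"
  have K: "K = 1 + F * K^2"
  proof -
    have "K = fps_compose (1 + fps_X * C^2) F" unfolding K_def C_def
      by (simp only: catalan_fps_eq[symmetric])
    also have "\<dots> = 1 + F * K^2"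
      unfolding K_def using F0
      by (simp add: fps_compose_add_distrib fps_compose_mult_distrib fps_compose_power)
    finally show ?thesis .
  qed
  define G where "G = N * ID * K"
  have eqG: "G * D - T * G^2 = N"
  proof -
    have "G * D - T * G^2 = N * K * (D * ID) - N * ((T * N * ID^2) * K^2)"
      unfolding G_def by (simp add: algebra_simps power2_eq_square)
    also have "\<dots> = N * K - N * (F * K^2)" by (simp add: DID FT)
    also have "\<dots> = N * (K - F * K^2)" by (simp add: algebra_simps)
    also have "K - F * K^2 = (1 + F * K^2) - F * K^2"
      using K by (rule arg_cong[where f="\<lambda>x. x - F * K^2"])
    also have "\<dots> = 1" by simp
    finally show ?thesis by simp
  qed
  have "(A - G) * (D - T * (A + G)) = (A * D - T * A^2) - (G * D - T * G^2)"
    by (simp add: algebra_simps power2_eq_square)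
  also have "\<dots> = 0" by (simp add: eqA eqG)
  finally have prod0: "(A - G) * (D - T * (A + G)) = 0" .
  have "fps_nth (D - T * (A + G)) 0 = 1" using D0 unfolding T_def by simp
  then have "D - T * (A + G) \<noteq> 0" by auto
  with prod0 have "A = G" by simp
  then show ?thesis
    unfolding A_def G_def ID_def K_def C_def F_def riordan_act_def by (simp add: mult.assoc)
qed

end
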